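(* Let $G=(V,E,(p_{uv})_{(u,v)\in E})$ be an influence graph. For every $S\subseteq V$, $\sigma^2(S)\le 2\,\sigma(S)$.
   Context: $G$ is a directed graph with activation probabilities $p_{uv}\in[0,1]$. $\mathbf L$ and $\hat{\mathbf L}$ are independent random subsets of $E$, each containing every edge $(u,v)$ independently with probability $p_{uv}$ (live-edge graphs). For $L\subseteq E$ and $S\subseteq V$, $\sigma_L(S)$ is the number of nodes reachable by a directed path (of length $\ge0$) in $(V,L)$ from some node of $S$, and $\sigma(S):=\mathbb{E}[\sigma_{\mathbf L}(S)]$. For $S\subseteq V$, the 2-level live-edge graph is $\mathbf L^2(S):=\mathbf L\cup(\hat{\mathbf L}\cap\{(u,v)\in E:u\in S\})$, and $\sigma^2(S):=\mathbb{E}_{\mathbf L,\hat{\mathbf L}}[\sigma_{\mathbf L^2(S)}(S)]$. *)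

theory Defs
  imports Complex_Main
begin

definition influence_graph :: "'a set \<Rightarrow> ('a \<times> 'a) set \<Rightarrow> ('a \<times> 'a \<Rightarrow> real) \<Rightarrow> bool" where
  "influence_graph V E p \<longleftrightarrow> finite V \<and> E \<subseteq> V \<times> V \<and> (\<forall>e\<in>E. 0 \<le> p e \<and> p e \<le> 1)"

text \<open>Probability that the random live-edge graph equals L (each edge e \<in> E
independently included with probability p e).\<close>
definition live_prob :: "('a \<times> 'a) set \<Rightarrow> ('a \<times> 'a \<Rightarrow> real) \<Rightarrow> ('a \<times> 'a) set \<Rightarrow> real" where
  "live_prob E p L = (\<Prod>e\<in>L. p e) * (\<Prod>e\<in>E - L. 1 - p e)"

definition reach_count :: "'a set \<Rightarrow> ('a \<times> 'a) set \<Rightarrow> 'a set \<Rightarrow> nat" where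
  "reach_count V L S = card {v \<in> V. \<exists>s\<in>S. (s, v) \<in> L\<^sup>*}"

definition sigma :: "'a set \<Rightarrow> ('a \<times> 'a) set \<Rightarrow> ('a \<times> 'a \<Rightarrow> real) \<Rightarrow> 'a set \<Rightarrow> real" where
  "sigma V E p S = (\<Sum>L\<in>Pow E. live_prob E p L * real (reach_count V L S))"

definition two_level :: "('a \<times> 'a) set \<Rightarrow> 'a set \<Rightarrow> ('a \<times> 'a) set \<Rightarrow> ('a \<times> 'a) set \<Rightarrow> ('a \<times> 'a) set" where
  "two_level E S L L' = L \<union> (L' \<inter> {(u, v) \<in> E. u \<in> S})"

definition sigma2 :: "'a set \<Rightarrow> ('a \<times> 'a) set \<Rightarrow> ('a \<times> 'a \<Rightarrow> real) \<Rightarrow> 'a set \<Rightarrow> real" where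
  "sigma2 V E p S = (\<Sum>L\<in>Pow E. \<Sum>L'\<in>Pow E.
      live_prob E p L * live_prob E p L' * real (reach_count V (two_level E S L L') S))"

end

theory Submission
  imports Defs
begin

lemma lp_sum1:
  assumes "finite E"
  shows "(\<Sum>L\<in>Pow E. live_prob E p L) = 1"
proof -
  have "(\<Prod>e\<in>E. p e + (1 - p e)) = (\<Sum>L\<in>Pow E. live_prob E p L)"
    unfolding live_prob_def by (rule prod_add[OF assms])
  then show ?thesis by simp
qed

lemma lp_nonneg:
  assumes "\<forall>e\<in>E. 0 \<le> p e \<and> p e \<le> 1" "L \<subseteq> E"
  shows "0 \<le> live_prob E p L"
  unfolding live_prob_def using assms
  by (intro mult_nonneg_nonneg prod_nonneg) auto

lemma lp_if:
  assumes "finite E" "L \<subseteq> E"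
  shows "live_prob E p L = (\<Prod>e\<in>E. if e \<in> L then p e else 1 - p e)"
proof -
  have "(\<Prod>e\<in>E. if e \<in> L then p e else 1 - p e) = prod p (E \<inter> {e. e \<in> L}) * prod (\<lambda>e. 1 - p e) (E \<inter> - {e. e \<in> L})"
    by (rule prod.If_cases[OF assms(1)])
  also have "E \<inter> {e. e \<in> L} = L" using assms by auto
  also have "E \<inter> - {e. e \<in> L} = E - L" by auto
  finally show ?thesis unfolding live_prob_def by simp
qed

lemma lp_swap:
  assumes "finite E" "L \<subseteq> E" "L' \<subseteq> E"
  shows "live_prob E p ((L - Ob) \<union> (L' \<inter> Ob)) * live_prob E p ((L' - Ob) \<union> (L \<inter> Ob))
       = live_prob E p L * live_prob E p L'"
proof -
  have s1: "(L - Ob) \<union> (L' \<inter> Ob) \<subseteq> E" "(L' - Ob) \<union> (L \<inter> Ob) \<subseteq> E" using assms by auto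
  show ?thesis
    unfolding lp_if[OF assms(1) s1(1)] lp_if[OF assms(1) s1(2)] lp_if[OF assms(1) assms(2)]
      lp_if[OF assms(1) assms(3)] prod.distrib[symmetric]
    by (rule prod.cong) auto
qed

lemma reach_split:
  assumes "L \<subseteq> E" "(s, v) \<in> (L \<union> (L' \<inter> {(u, v) \<in> E. u \<in> S}))\<^sup>*" "s \<in> S"
  shows "(\<exists>s\<in>S. (s, v) \<in> L\<^sup>*) \<or>
         (\<exists>s\<in>S. (s, v) \<in> ((L - {(u, v) \<in> E. u \<in> S}) \<union> (L' \<inter> {(u, v) \<in> E. u \<in> S}))\<^sup>*)"
proof -
  define Ob where "Ob = {(u, v) \<in> E. u \<in> S}"
  have "v \<in> S \<or> (\<exists>s w. (s, w) \<in> L \<inter> Ob \<and> (w, v) \<in> (L - Ob)\<^sup>*)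
        \<or> (\<exists>s w. (s, w) \<in> L' \<inter> Ob \<and> (w, v) \<in> (L - Ob)\<^sup>*)"
    using assms(2) unfolding Ob_def[symmetric]
  proof (induction rule: rtrancl_induct)
    case base
    then show ?case using assms(3) by simp
  next
    case (step y z)
    show ?case
    proof (cases "(y, z) \<in> Ob")
      case True
      then show ?thesis using step(2) by blast
    next
      case False
      then have yz: "(y, z) \<in> L - Ob" using step(2) by blast
      then have "y \<notin> S" using False assms(1) unfolding Ob_def by auto
      then show ?thesis using step(3) yz
        by (meson rtrancl.rtrancl_into_rtrancl)
    qed
  qed
  moreover have "(L - Ob)\<^sup>* \<subseteq> L\<^sup>*" by (rule rtrancl_mono) blast
  moreover have "(L - Ob)\<^sup>* \<subseteq> ((L - Ob) \<union> (L' \<inter> Ob))\<^sup>*" by (rule rtrancl_mono) blast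
  ultimately show ?thesis unfolding Ob_def[symmetric]
    by (smt (verit, ccfv_SIG) IntD1 IntD2 Ob_def case_prodD converse_rtrancl_into_rtrancl
        mem_Collect_eq rtrancl.rtrancl_refl subsetD UnI2)
qed

theorem lemma7:
  fixes V :: "'a set" and E :: "('a \<times> 'a) set" and p :: "'a \<times> 'a \<Rightarrow> real" and S :: "'a set"
  assumes "influence_graph V E p" and "S \<subseteq> V"
  shows "sigma2 V E p S \<le> 2 * sigma V E p S"
proof -
  have finV: "finite V" and EV: "E \<subseteq> V \<times> V" and pr: "\<forall>e\<in>E. 0 \<le> p e \<and> p e \<le> 1"
    using assms(1) unfolding influence_graph_def by auto
  have finE: "finite E" using finV EV finite_subset by blast
  define Ob where "Ob = {(u, v) \<in> E. u \<in> S}"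
  define A where "A = (\<lambda>L L'. (L - Ob) \<union> (L' \<inter> Ob))"
  define lp where "lp = live_prob E p"
  define f where "f = (\<lambda>L. real (reach_count V L S))"
  have bound: "reach_count V (two_level E S L L') S \<le> reach_count V L S + reach_count V (A L L') S"
    if "L \<subseteq> E" for L L'
  proof -
    have "{v \<in> V. \<exists>s\<in>S. (s, v) \<in> (two_level E S L L')\<^sup>*} \<subseteq>
          {v \<in> V. \<exists>s\<in>S. (s, v) \<in> L\<^sup>*} \<union> {v \<in> V. \<exists>s\<in>S. (s, v) \<in> (A L L')\<^sup>*}"
      using reach_split[OF that] unfolding two_level_def A_def Ob_def by blast
    then have "card {v \<in> V. \<exists>s\<in>S. (s, v) \<in> (two_level E S L L')\<^sup>*} \<le>
          card ({v \<in> V. \<exists>s\<in>S. (s, v) \<in> L\<^sup>*} \<union> {v \<in> V. \<exists>s\<in>S. (s, v) \<in> (A L L')\<^sup>*})"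
      by (intro card_mono) (use finV in auto)
    also have "\<dots> \<le> card {v \<in> V. \<exists>s\<in>S. (s, v) \<in> L\<^sup>*} + card {v \<in> V. \<exists>s\<in>S. (s, v) \<in> (A L L')\<^sup>*}"
      by (rule card_Un_le)
    finally show ?thesis unfolding reach_count_def .
  qed
  have nn: "\<And>L. L \<in> Pow E \<Longrightarrow> 0 \<le> lp L" unfolding lp_def using lp_nonneg[OF pr] by blast
  have s1: "(\<Sum>L\<in>Pow E. lp L) = 1" unfolding lp_def by (rule lp_sum1[OF finE])
  have "sigma2 V E p S \<le> (\<Sum>L\<in>Pow E. \<Sum>L'\<in>Pow E. lp L * lp L' * (f L + f (A L L')))"
    unfolding sigma2_def lp_def[symmetric]
  proof (intro sum_mono)
    fix L L' assume h: "L \<in> Pow E" "L' \<in> Pow E"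
    have "real (reach_count V (two_level E S L L') S) \<le> f L + f (A L L')"
      unfolding f_def using bound[of L L'] h by simp
    then show "lp L * lp L' * real (reach_count V (two_level E S L L') S) \<le> lp L * lp L' * (f L + f (A L L'))"
      using nn h by (intro mult_left_mono) auto
  qed
  also have "\<dots> = (\<Sum>L\<in>Pow E. \<Sum>L'\<in>Pow E. lp L * lp L' * f L)
                + (\<Sum>L\<in>Pow E. \<Sum>L'\<in>Pow E. lp L * lp L' * f (A L L'))"
    by (simp add: distrib_left sum.distrib)
  also have "(\<Sum>L\<in>Pow E. \<Sum>L'\<in>Pow E. lp L * lp L' * f L) = sigma V E p S"
    unfolding sigma_def lp_def[symmetric] f_def[symmetric]
    by (simp add: sum_distrib_right[symmetric] sum_distrib_left[symmetric] s1 mult.commute f_def)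
  also have "(\<Sum>L\<in>Pow E. \<Sum>L'\<in>Pow E. lp L * lp L' * f (A L L'))
           = (\<Sum>(L, L')\<in>Pow E \<times> Pow E. lp L * lp L' * f (A L L'))"
    by (rule sum.cartesian_product)
  also have "\<dots> = (\<Sum>(L, L')\<in>Pow E \<times> Pow E. lp L * lp L' * f L)"
  proof (rule sum.reindex_bij_witness[where i = "\<lambda>(L, L'). (A L L', A L' L)" and j = "\<lambda>(L, L'). (A L L', A L' L)"])
    fix a assume "a \<in> Pow E \<times> Pow E"
    then show "(case (case a of (L, L') \<Rightarrow> (A L L', A L' L)) of (L, L') \<Rightarrow> (A L L', A L' L)) = a"
      unfolding A_def by (cases a) auto
  next
    fix a assume "a \<in> Pow E \<times> Pow E"
    then show "(case a of (L, L') \<Rightarrow> (A L L', A L' L)) \<in> Pow E \<times> Pow E"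
      unfolding A_def by (cases a) auto
  next
    fix a assume "a \<in> Pow E \<times> Pow E"
    then show "(case (case a of (L, L') \<Rightarrow> (A L L', A L' L)) of (L, L') \<Rightarrow> (A L L', A L' L)) = a"
      unfolding A_def by (cases a) auto
  next
    fix a assume "a \<in> Pow E \<times> Pow E"
    then show "(case a of (L, L') \<Rightarrow> (A L L', A L' L)) \<in> Pow E \<times> Pow E"
      unfolding A_def by (cases a) auto
  next
    fix a assume a: "a \<in> Pow E \<times> Pow E"
    obtain L L' where aL: "a = (L, L')" by (cases a)
    have LE: "L \<subseteq> E" "L' \<subseteq> E" using a aL by auto
    have "lp (A L L') * lp (A L' L) = lp L * lp L'"
      unfolding lp_def A_def by (rule lp_swap[OF finE LE])
    then show "(case (case a of (L, L') \<Rightarrow> (A L L', A L' L)) of (L, L') \<Rightarrow> lp L * lp L' * f L) =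
         (case a of (L, L') \<Rightarrow> lp L * lp L' * f (A L L'))"
      using aL by simp
  qed
  also have "\<dots> = (\<Sum>L\<in>Pow E. \<Sum>L'\<in>Pow E. lp L * lp L' * f L)"
    by (rule sum.cartesian_product[symmetric])
  also have "\<dots> = sigma V E p S"
    unfolding sigma_def lp_def[symmetric] f_def[symmetric]
    by (simp add: sum_distrib_right[symmetric] sum_distrib_left[symmetric] s1 mult.commute f_def)
  finally show ?thesis by simp
qed

end
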